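(* For every set $\Gamma\cup\{\varphi\}$ of formulas over $\Sigma^\circ$: if $\Gamma\vdash_{\bf Cila}\varphi$ then $\Gamma\vDash^{\mathsf{RN}}_{\mathcal{M}_{\bf Cila}}\varphi$.
   Context: $\Sigma^\circ$ has unary $\neg,\circ$ and binary $\wedge,\vee,\to$. ${\bf Cila}$ is the Hilbert calculus with Modus Ponens as only rule and axiom schemata: $\alpha\to(\beta\to\alpha)$; $(\alpha\to(\beta\to\gamma))\to((\alpha\to\beta)\to(\alpha\to\gamma))$; $\alpha\to(\beta\to(\alpha\wedge\beta))$; $(\alpha\wedge\beta)\to\alpha$; $(\alpha\wedge\beta)\to\beta$; $\alpha\to(\alpha\vee\beta)$; $\beta\to(\alpha\vee\beta)$; $(\alpha\to\gamma)\to((\beta\to\gamma)\to((\alpha\vee\beta)\to\gamma))$; $\alpha\vee\neg\alpha$; $\alpha\vee(\alpha\to\beta)$; $\circ\alpha\to(\alpha\to(\neg\alpha\to\beta))$; $\neg(\alpha\wedge\neg\alpha)\to\circ\alpha$; $\neg\circ\alpha\to(\alpha\wedge\neg\alpha)$; $\neg\neg\alpha\to\alpha$; and $(\circ\alpha\wedge\circ\beta)\to\circ(\alpha\#\beta)$ for $\#\in\{\vee,\wedge,\to\}$. $\mathcal{A}_{\bf Cila}$ is the $\Sigma^\circ$-multialgebra with universe $\{F,t,T\}$, $D=\{t,T\}$, and: $\tilde\vee$: $F\tilde\vee F=\{F\}$, $F\tilde\vee T=T\tilde\vee F=T\tilde\vee T=\{T\}$, and $x\tilde\vee y=D$ whenever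 $t\in\{x,y\}$; $\tilde\wedge$: $x\tilde\wedge y=\{F\}$ if $F\in\{x,y\}$, $T\tilde\wedge T=\{T\}$, $t\tilde\wedge t=t\tilde\wedge T=T\tilde\wedge t=D$; $\tilde\neg F=\{T\}$, $\tilde\neg t=D$, $\tilde\neg T=\{F\}$; $\tilde\to$: $F\tilde\to F=F\tilde\to T=T\tilde\to T=\{T\}$, $t\tilde\to F=T\tilde\to F=\{F\}$, and $x\tilde\to t=D$ for all $x$, $t\tilde\to T=D$; $\tilde\circ F=\tilde\circ T=\{T\}$, $\tilde\circ t=\{F\}$. A valuation is a map $\nu$ from formulas to $\{F,t,T\}$ with $\nu(\#\alpha)\in\tilde\#\nu(\alpha)$ and $\nu(\alpha\#\beta)\in\nu(\alpha)\tilde\#\nu(\beta)$. $\mathcal{F}_{\bf Cila}$ is the set of valuations with $\nu(\alpha)=t\Rightarrow\nu(\alpha\wedge\neg\alpha)=T$ for all $\alpha$. $\mathcal{M}_{\bf Cila}=(\mathcal{A}_{\bf Cila},D,\mathcal{F}_{\bf Cila})$; $\Gamma\vDash^{\mathsf{RN}}_{\mathcal{M}_{\bf Cila}}\varphi$ iff every $\nu\in\mathcal{F}_{\bf Cila}$ with $\nu[\Gamma]\subseteq D$ has $\nu(\varphi)\in D$. *)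

theory Defs
  imports Main
begin

datatype 'v fm =
    Var 'v
  | Neg "'v fm"
  | Circ "'v fm"
  | And "'v fm" "'v fm"
  | Or "'v fm" "'v fm"
  | Imp "'v fm" "'v fm"

inductive cila_axiom :: "'v fm \<Rightarrow> bool" where
  ax1: "cila_axiom (Imp a (Imp b a))"
| ax2: "cila_axiom (Imp (Imp a (Imp b c)) (Imp (Imp a b) (Imp a c)))"
| ax3: "cila_axiom (Imp a (Imp b (And a b)))"
| ax4: "cila_axiom (Imp (And a b) a)"
| ax5: "cila_axiom (Imp (And a b) b)"
| ax6: "cila_axiom (Imp a (Or a b))"
| ax7: "cila_axiom (Imp b (Or a b))"
| ax8: "cila_axiom (Imp (Imp a c) (Imp (Imp b c) (Imp (Or a b) c)))"
| ax9: "cila_axiom (Or a (Neg a))"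
| ax10: "cila_axiom (Or a (Imp a b))"
| bc1: "cila_axiom (Imp (Circ a) (Imp a (Imp (Neg a) b)))"
| ci: "cila_axiom (Imp (Neg (And a (Neg a))) (Circ a))"
| cl: "cila_axiom (Imp (Neg (Circ a)) (And a (Neg a)))"
| cf: "cila_axiom (Imp (Neg (Neg a)) a)"
| ca_or: "cila_axiom (Imp (And (Circ a) (Circ b)) (Circ (Or a b)))"
| ca_and: "cila_axiom (Imp (And (Circ a) (Circ b)) (Circ (And a b)))"
| ca_imp: "cila_axiom (Imp (And (Circ a) (Circ b)) (Circ (Imp a b)))"

inductive cila_deriv :: "'v fm set \<Rightarrow> 'v fm \<Rightarrow> bool" where
  prem: "\<phi> \<in> \<Gamma> \<Longrightarrow> cila_deriv \<Gamma> \<phi>"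
| axiom: "cila_axiom \<phi> \<Longrightarrow> cila_deriv \<Gamma> \<phi>"
| mp: "cila_deriv \<Gamma> \<phi> \<Longrightarrow> cila_deriv \<Gamma> (Imp \<phi> \<psi>) \<Longrightarrow> cila_deriv \<Gamma> \<psi>"

datatype tv = vF | vt | vT

definition Des :: "tv set" where "Des = {vt, vT}"

fun mor :: "tv \<Rightarrow> tv \<Rightarrow> tv set" where
  "mor vF vF = {vF}"
| "mor vF vT = {vT}"
| "mor vT vF = {vT}"
| "mor vT vT = {vT}"
| "mor _ _ = Des"

fun mand :: "tv \<Rightarrow> tv \<Rightarrow> tv set" where
  "mand vF _ = {vF}"
| "mand _ vF = {vF}"
| "mand vT vT = {vT}"
| "mand _ _ = Des"

fun mneg :: "tv \<Rightarrow> tv set" where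
  "mneg vF = {vT}"
| "mneg vt = Des"
| "mneg vT = {vF}"

fun mimp :: "tv \<Rightarrow> tv \<Rightarrow> tv set" where
  "mimp vF vF = {vT}"
| "mimp vF vT = {vT}"
| "mimp vT vT = {vT}"
| "mimp vt vF = {vF}"
| "mimp vT vF = {vF}"
| "mimp _ vt = Des"
| "mimp vt vT = Des"

fun mcirc :: "tv \<Rightarrow> tv set" where
  "mcirc vF = {vT}"
| "mcirc vT = {vT}"
| "mcirc vt = {vF}"

definition valuation :: "('v fm \<Rightarrow> tv) \<Rightarrow> bool" where
  "valuation \<nu> \<longleftrightarrow>
     (\<forall>a. \<nu> (Neg a) \<in> mneg (\<nu> a)) \<and>
     (\<forall>a. \<nu> (Circ a) \<in> mcirc (\<nu> a)) \<and>
     (\<forall>a b. \<nu> (And a b) \<in> mand (\<nu> a) (\<nu> b)) \<and>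
     (\<forall>a b. \<nu> (Or a b) \<in> mor (\<nu> a) (\<nu> b)) \<and>
     (\<forall>a b. \<nu> (Imp a b) \<in> mimp (\<nu> a) (\<nu> b))"

definition F_Cila :: "('v fm \<Rightarrow> tv) set" where
  "F_Cila = {\<nu>. valuation \<nu> \<and> (\<forall>a. \<nu> a = vt \<longrightarrow> \<nu> (And a (Neg a)) = vT)}"

definition RN_conseq :: "'v fm set \<Rightarrow> 'v fm \<Rightarrow> bool" where
  "RN_conseq \<Gamma> \<phi> \<longleftrightarrow> (\<forall>\<nu>\<in>F_Cila. \<nu> ` \<Gamma> \<subseteq> Des \<longrightarrow> \<nu> \<phi> \<in> Des)"

end

theory Submission
  imports Defs
begin

lemma mp_sound:
  assumes "valuation \<nu>" "\<nu> a \<in> Des" "\<nu> (Imp a b) \<in> Des"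
  shows "\<nu> b \<in> Des"
proof -
  have "\<nu> (Imp a b) \<in> mimp (\<nu> a) (\<nu> b)" using assms(1) unfolding valuation_def by blast
  thus ?thesis using assms(2,3)
    by (cases "\<nu> a"; cases "\<nu> b"; auto simp: Des_def)
qed

lemma vfacts:
  assumes "valuation \<nu>"
  shows "\<nu> (Imp a b) \<noteq> vF \<longleftrightarrow> (\<nu> a = vF \<or> \<nu> b \<noteq> vF)"
    "\<nu> (And a b) \<noteq> vF \<longleftrightarrow> (\<nu> a \<noteq> vF \<and> \<nu> b \<noteq> vF)"
    "\<nu> (Or a b) \<noteq> vF \<longleftrightarrow> (\<nu> a \<noteq> vF \<or> \<nu> b \<noteq> vF)"
    "\<nu> (Neg a) \<noteq> vF \<longleftrightarrow> \<nu> a \<noteq> vT"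
    "\<nu> (Circ a) \<noteq> vF \<longleftrightarrow> \<nu> a \<noteq> vt"
    "\<nu> (Circ a) \<noteq> vt"
    "\<nu> a = vF \<Longrightarrow> \<nu> (Neg a) = vT"
    "\<nu> a = vT \<Longrightarrow> \<nu> b = vT \<Longrightarrow> \<nu> (And a b) = vT"
    "\<nu> a = vT \<Longrightarrow> \<nu> (Neg a) = vF"
    "\<nu> a = vt \<Longrightarrow> \<nu> (Circ a) = vF"
    "\<nu> a \<noteq> vt \<Longrightarrow> \<nu> b \<noteq> vt \<Longrightarrow> \<nu> (Or a b) \<noteq> vt"
    "\<nu> a \<noteq> vt \<Longrightarrow> \<nu> b \<noteq> vt \<Longrightarrow> \<nu> (And a b) \<noteq> vt"
    "\<nu> a \<noteq> vt \<Longrightarrow> \<nu> b \<noteq> vt \<Longrightarrow> \<nu> (Imp a b) \<noteq> vt"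
proof -
  have V: "\<nu> (Neg a) \<in> mneg (\<nu> a)" "\<nu> (Circ a) \<in> mcirc (\<nu> a)"
    "\<nu> (And a b) \<in> mand (\<nu> a) (\<nu> b)" "\<nu> (Or a b) \<in> mor (\<nu> a) (\<nu> b)"
    "\<nu> (Imp a b) \<in> mimp (\<nu> a) (\<nu> b)" using assms unfolding valuation_def by auto
  show "\<nu> (Imp a b) \<noteq> vF \<longleftrightarrow> (\<nu> a = vF \<or> \<nu> b \<noteq> vF)"
    using V(5) by (cases "\<nu> a"; cases "\<nu> b"; auto simp: Des_def)
  show "\<nu> (And a b) \<noteq> vF \<longleftrightarrow> (\<nu> a \<noteq> vF \<and> \<nu> b \<noteq> vF)"
    using V(3) by (cases "\<nu> a"; cases "\<nu> b"; auto simp: Des_def)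
  show "\<nu> (Or a b) \<noteq> vF \<longleftrightarrow> (\<nu> a \<noteq> vF \<or> \<nu> b \<noteq> vF)"
    using V(4) by (cases "\<nu> a"; cases "\<nu> b"; auto simp: Des_def)
  show "\<nu> (Neg a) \<noteq> vF \<longleftrightarrow> \<nu> a \<noteq> vT"
    using V(1) by (cases "\<nu> a"; auto simp: Des_def)
  show "\<nu> (Circ a) \<noteq> vF \<longleftrightarrow> \<nu> a \<noteq> vt"
    using V(2) by (cases "\<nu> a"; auto)
  show "\<nu> (Circ a) \<noteq> vt"
    using V(2) by (cases "\<nu> a"; auto)
  show "\<nu> a = vF \<Longrightarrow> \<nu> (Neg a) = vT" using V(1) by auto
  show "\<nu> a = vT \<Longrightarrow> \<nu> (Neg a) = vF" using V(1) by auto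
  show "\<nu> a = vt \<Longrightarrow> \<nu> (Circ a) = vF" using V(2) by auto
  show "\<nu> a \<noteq> vt \<Longrightarrow> \<nu> b \<noteq> vt \<Longrightarrow> \<nu> (Or a b) \<noteq> vt"
    using V(4) by (cases "\<nu> a"; cases "\<nu> b"; auto)
  show "\<nu> a \<noteq> vt \<Longrightarrow> \<nu> b \<noteq> vt \<Longrightarrow> \<nu> (And a b) \<noteq> vt"
    using V(3) by (cases "\<nu> a"; cases "\<nu> b"; auto)
  show "\<nu> a \<noteq> vt \<Longrightarrow> \<nu> b \<noteq> vt \<Longrightarrow> \<nu> (Imp a b) \<noteq> vt"
    using V(5) by (cases "\<nu> a"; cases "\<nu> b"; auto)
  show "\<nu> a = vT \<Longrightarrow> \<nu> b = vT \<Longrightarrow> \<nu> (And a b) = vT" using V(3) by auto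
qed

lemma Des_iff: "x \<in> Des \<longleftrightarrow> x \<noteq> vF"
  by (cases x; simp add: Des_def)

lemma ax_sound:
  assumes "cila_axiom \<phi>" "\<nu> \<in> F_Cila"
  shows "\<nu> \<phi> \<in> Des"
proof -
  have val: "valuation \<nu>" and R: "\<And>a. \<nu> a = vt \<Longrightarrow> \<nu> (And a (Neg a)) = vT"
    using assms(2) unfolding F_Cila_def by auto
  note S = vfacts(1-5)[OF val] Des_iff
  from assms(1) show ?thesis
  proof cases
    case (ci a)
    then show ?thesis using R[of a] vfacts(2,8)[OF val, of a "Neg a"] vfacts(4,9)[OF val, of "And a (Neg a)"]
      by (cases "\<nu> a"; simp add: S)
  next
    case (cl a)
    then show ?thesis using R[of a] vfacts(4-6,9)[OF val, of "Circ a"] vfacts(5,6)[OF val, of a]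
      by (cases "\<nu> a"; cases "\<nu> (Circ a)"; simp add: S)
  next
    case (cf a)
    then show ?thesis using vfacts(4,7)[OF val, of a] vfacts(4,9)[OF val, of "Neg a"]
      by (cases "\<nu> a"; cases "\<nu> (Neg a)"; simp add: S)
  next
    case (ax9 a)
    then show ?thesis using vfacts(4)[OF val, of a] by (cases "\<nu> a"; simp add: S)
  next
    case (bc1 a b)
    then show ?thesis using vfacts(4,5,9,10)[OF val, of a] by (cases "\<nu> a"; simp add: S)
  qed (auto simp: S dest: vfacts(11-13)[OF val])
qed

theorem mainTheorem5:
  fixes \<Gamma> :: "'v fm set" and \<phi> :: "'v fm"
  assumes "cila_deriv \<Gamma> \<phi>"
  shows "RN_conseq \<Gamma> \<phi>"
  unfolding RN_conseq_def
proof (intro ballI impI)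
  fix \<nu> :: "'v fm \<Rightarrow> tv" assume F: "\<nu> \<in> F_Cila" and G: "\<nu> ` \<Gamma> \<subseteq> Des"
  have val: "valuation \<nu>" using F unfolding F_Cila_def by auto
  have "\<And>\<Delta> \<psi>. cila_deriv \<Delta> \<psi> \<Longrightarrow> \<Delta> = \<Gamma> \<Longrightarrow> \<nu> \<psi> \<in> Des"
  proof -
    fix \<Delta> \<psi> assume "cila_deriv \<Delta> \<psi>" "\<Delta> = \<Gamma>"
    then show "\<nu> \<psi> \<in> Des"
    proof induction
      case (prem \<phi> \<Gamma>') then show ?case using G by auto
    next
      case (axiom \<phi> \<Gamma>') then show ?case using ax_sound F by blast
    next
      case (mp \<Gamma>' \<phi> \<psi>) then show ?case using mp_sound val by blast
    qed
  qed
  then show "\<nu> \<phi> \<in> Des" using assms by blast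
qed

end
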